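(* Let $d = d_s + d_n$, let $\mathbf{v} \in \mathbb{R}^{d_s}$ and $\sigma > 0$. Consider the data distribution $\mathcal{D}$ on pairs $(\mathbf{x}, y)$ with $y \in \{-1,1\}$ and $\mathbf{x} = (\mathbf{x}_s, \mathbf{x}_n) \in \mathbb{R}^{d_s}\times\mathbb{R}^{d_n}$, where conditionally on $y$, $\mathbf{x}_s \sim \mathcal{N}(y\mathbf{v}, \sigma^2 I_{d_s})$ and $\mathbf{x}_n \sim \mathcal{N}(0, \sigma^2 I_{d_n})$. Consider the two-layer linear model $f(\mathbf{x}) = W_2 W_1 \mathbf{x}$ with $W_2 \in \mathbb{R}^{1\times m}$, $W_1 \in \mathbb{R}^{m \times d}$, and write $W_1 = (W_s \; W_n)$ with $W_s \in \mathbb{R}^{m\times d_s}$, $W_n \in \mathbb{R}^{m \times d_n}$. The model is trained on the population mean squared error $$\mathcal{L}(W_1, W_2) = \mathbb{E}_{(\mathbf{x},y)\sim\mathcal{D}}\left[\tfrac{1}{2}\|f(\mathbf{x}) - y\|^2\right]$$ by gradient flow. Suppose that at initialization $W_2^\top W_2 = W_1 W_1^\top$, and that the gradient flow converges to a global minimum of $\mathcal{L}$. Then at this limit point $W_n = 0$.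
   Context: Gradient flow means the continuous-time dynamics $\frac{d}{dt}W_1 = -\frac{\partial \mathcal{L}}{\partial W_1}$, $\frac{d}{dt}W_2 = -\frac{\partial \mathcal{L}}{\partial W_2}$. $W_s$ collects the first-layer weights connected to the signal coordinates $\mathbf{x}_s$ and $W_n$ those connected to the pure-noise coordinates $\mathbf{x}_n$. *)

theory Defs
  imports "HOL-Probability.Probability"
begin

definition gauss_vec :: "real \<Rightarrow> real^'i::finite \<Rightarrow> ('i \<Rightarrow> real) measure" where
  "gauss_vec \<sigma> \<mu> = PiM UNIV (\<lambda>i. density lborel (normal_density (\<mu> $ i) \<sigma>))"

text \<open>Concatenation x = (x_s, x_n) in R^(d_s + d_n); the index type of R^d is 's + 'n.\<close>
definition concat_vec :: "('s::finite \<Rightarrow> real) \<Rightarrow> ('n::finite \<Rightarrow> real) \<Rightarrow> real^('s + 'n)" where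
  "concat_vec xs xn = (\<chi> j. case j of Inl i \<Rightarrow> xs i | Inr i \<Rightarrow> xn i)"

definition cond_dist :: "real \<Rightarrow> real^'s::finite \<Rightarrow> real \<Rightarrow> (('s \<Rightarrow> real) \<times> ('n::finite \<Rightarrow> real)) measure" where
  "cond_dist \<sigma> v y = gauss_vec \<sigma> (y *\<^sub>R v) \<Otimes>\<^sub>M gauss_vec \<sigma> 0"

definition model :: "(real^('d::finite)^('m::finite)) \<times> (real^'m^1) \<Rightarrow> real^'d \<Rightarrow> real^1" where
  "model W x = (snd W ** fst W) *v x"

text \<open>Population MSE: E_{(x,y) ~ D}[1/2 ||f(x) - y||^2], where P(y = 1) = p, P(y = -1) = 1 - p.\<close>
definition pop_loss :: "real \<Rightarrow> real \<Rightarrow> real^'s::finite \<Rightarrow>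
    (real^('s + 'n::finite)^('m::finite)) \<times> (real^'m^1) \<Rightarrow> real" where
  "pop_loss p \<sigma> v W =
     p * (\<integral>z. 1/2 * (norm (model W (concat_vec (fst z) (snd z)) - vec 1))\<^sup>2
            \<partial>(cond_dist \<sigma> v 1 :: (('s \<Rightarrow> real) \<times> ('n \<Rightarrow> real)) measure))
   + (1 - p) * (\<integral>z. 1/2 * (norm (model W (concat_vec (fst z) (snd z)) - vec (-1)))\<^sup>2
            \<partial>(cond_dist \<sigma> v (-1) :: (('s \<Rightarrow> real) \<times> ('n \<Rightarrow> real)) measure))"

definition is_gradient :: "('a::real_inner \<Rightarrow> real) \<Rightarrow> 'a \<Rightarrow> 'a \<Rightarrow> bool" where
  "is_gradient L G W \<longleftrightarrow> (L has_derivative (\<lambda>h. G \<bullet> h)) (at W)"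

definition gradient_flow :: "('a::real_inner \<Rightarrow> real) \<Rightarrow> (real \<Rightarrow> 'a) \<Rightarrow> bool" where
  "gradient_flow L W \<longleftrightarrow> (\<forall>t\<ge>0. \<exists>G. is_gradient L G (W t) \<and>
       (W has_vector_derivative - G) (at t within {0..}))"

end

theory Submission
  imports Defs
begin


lemma bilinear_mm: "bilinear ((**) :: real^'n^'m \<Rightarrow> real^'p^'n \<Rightarrow> real^'p^'m)"
  unfolding bilinear_def
  by (auto intro!: linearI simp: matrix_matrix_mult_def vec_eq_iff sum.distrib
      sum_distrib_left algebra_simps)

lemma bb_mm: "bounded_bilinear ((**) :: real^'n^'m \<Rightarrow> real^'p^'n \<Rightarrow> real^'p^'m)"
  using bilinear_mm bilinear_conv_bounded_bilinear by blast

lemma bl_transpose: "bounded_linear (transpose :: real^'n^'m \<Rightarrow> real^'m^'n)"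
  by (rule linear_conv_bounded_linear[THEN iffD1])
     (auto intro!: linearI simp: transpose_def vec_eq_iff)

lemma sum_if_const: "(\<Sum>x\<in>A. if P then f x else 0) = (if P then sum f A else 0)"
  by simp

lemma grad_balance:
  fixes L :: "(real^'d^'m) \<times> (real^'m^'k) \<Rightarrow> real"
  assumes dep: "\<And>X Y. snd X ** fst X = snd Y ** fst Y \<Longrightarrow> L X = L Y"
  and D: "(L has_derivative (\<lambda>h. G \<bullet> h)) (at W)"
  shows "fst G ** transpose (fst W) = transpose (snd W) ** snd G"
proof -
  interpret bb: bounded_bilinear "(**) :: real^'m^'k \<Rightarrow> real^'d^'m \<Rightarrow> real^'d^'k"
    by (rule bb_mm)
  interpret b1: bounded_bilinear "(**) :: real^'m^'m \<Rightarrow> real^'d^'m \<Rightarrow> real^'d^'m"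
    by (rule bb_mm)
  interpret b2: bounded_bilinear "(**) :: real^'m^'k \<Rightarrow> real^'m^'m \<Rightarrow> real^'m^'k"
    by (rule bb_mm)
  have key: "G \<bullet> (A ** fst W, - (snd W ** A)) = 0" for A :: "real^'m^'m"
  proof -
    define H where "H = (A ** fst W, - (snd W ** A))"
    have d1: "((\<lambda>s::real. W + s *\<^sub>R H) has_derivative (\<lambda>s. s *\<^sub>R H)) (at 0)"
      by (auto intro!: derivative_eq_intros)
    have d2: "((\<lambda>s::real. W - s *\<^sub>R H) has_derivative (\<lambda>s. - (s *\<^sub>R H))) (at 0)"
      by (auto intro!: derivative_eq_intros)
    have D': "(L has_derivative (\<lambda>h. G \<bullet> h)) (at (W + 0 *\<^sub>R H))"
      "(L has_derivative (\<lambda>h. G \<bullet> h)) (at (W - 0 *\<^sub>R H))" using D by simp_all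
    have e1: "((\<lambda>s. L (W + s *\<^sub>R H)) has_derivative (\<lambda>s. G \<bullet> (s *\<^sub>R H))) (at 0)"
      using has_derivative_compose[OF d1 D'(1)] by simp
    have e2: "((\<lambda>s. L (W - s *\<^sub>R H)) has_derivative (\<lambda>s. G \<bullet> (- (s *\<^sub>R H)))) (at 0)"
      using has_derivative_compose[OF d2 D'(2)] by simp
    have eq: "L (W + s *\<^sub>R H) = L (W - s *\<^sub>R H)" for s
    proof (rule dep)
      show "snd (W + s *\<^sub>R H) ** fst (W + s *\<^sub>R H) = snd (W - s *\<^sub>R H) ** fst (W - s *\<^sub>R H)"
        unfolding H_def
        by (simp add: bb.add_left bb.add_right bb.diff_left bb.diff_right bb.scaleR_left bb.scaleR_right
             bb.minus_left bb.minus_right b1.scaleR_left b2.scaleR_right b2.diff_left b2.add_left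
             b2.scaleR_left matrix_mul_assoc scaleR_diff_right scaleR_add_right)
    qed
    have "(\<lambda>s. G \<bullet> (s *\<^sub>R H)) = (\<lambda>s. G \<bullet> (- (s *\<^sub>R H)))"
      using has_derivative_unique[OF e1] e2 eq by simp
    from fun_cong[OF this, of 1] have "G \<bullet> H = - (G \<bullet> H)"
      by (simp only: scaleR_one inner_minus_right)
    then show ?thesis unfolding H_def[symmetric] by simp
  qed
  show ?thesis
  proof (simp add: vec_eq_iff, intro allI)
    fix k l :: 'm
    define A :: "real^'m^'m" where "A = (\<chi> a b. if a = k \<and> b = l then 1 else 0)"
    have a1: "A ** fst W = (\<chi> a j. if a = k then fst W $ l $ j else 0)"
      unfolding A_def by (simp add: vec_eq_iff matrix_matrix_mult_def if_distrib[where f="\<lambda>x. x * _"] cong: if_cong)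
    have a2: "snd W ** A = (\<chi> r b. if b = l then snd W $ r $ k else 0)"
      unfolding A_def by (simp add: vec_eq_iff matrix_matrix_mult_def if_distrib[where f="\<lambda>x. _ * x"] cong: if_cong)
    have "G \<bullet> (A ** fst W, - (snd W ** A)) = (fst G ** transpose (fst W)) $ k $ l - (transpose (snd W) ** snd G) $ k $ l"
      unfolding a1 a2
      by (simp add: inner_prod_def inner_vec_def matrix_matrix_mult_def transpose_def
           if_distrib[where f="\<lambda>x. _ * x"] sum_negf mult.commute sum_if_const cong: if_cong)
    then show "(fst G ** transpose (fst W)) $ k $ l = (transpose (snd W) ** snd G) $ k $ l"
      using key[of A] by simp
  qed
qed

definition balD :: "(real^'d^'m) \<times> (real^'m^'k) \<Rightarrow> real^'m^'m" where
  "balD X = fst X ** transpose (fst X) - transpose (snd X) ** snd X"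

lemma conserve:
  fixes L :: "(real^'d^'m) \<times> (real^'m^'k) \<Rightarrow> real"
  assumes dep: "\<And>X Y. snd X ** fst X = snd Y ** fst Y \<Longrightarrow> L X = L Y"
  and gf: "gradient_flow L W" and t: "t \<ge> 0"
  shows "balD (W t) = balD (W 0)"
proof -
  have der: "((\<lambda>t. balD (W t)) has_derivative (\<lambda>h. 0)) (at t within {0..})" if t: "t \<ge> 0" for t
  proof -
    from gf t obtain G where G: "is_gradient L G (W t)"
      and WD: "(W has_vector_derivative - G) (at t within {0..})"
      unfolding gradient_flow_def by blast
    have bal: "fst G ** transpose (fst (W t)) = transpose (snd (W t)) ** snd G"
      using grad_balance[OF dep G[unfolded is_gradient_def]] by blast
    have WD': "(W has_derivative (\<lambda>h. h *\<^sub>R - G)) (at t within {0..})"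
      using WD unfolding has_vector_derivative_def .
    have f1: "((\<lambda>t. fst (W t)) has_derivative (\<lambda>h. fst (h *\<^sub>R - G))) (at t within {0..})"
      using has_derivative_fst[OF WD'] .
    have f2: "((\<lambda>t. snd (W t)) has_derivative (\<lambda>h. snd (h *\<^sub>R - G))) (at t within {0..})"
      using has_derivative_snd[OF WD'] .
    have f1t: "((\<lambda>t. transpose (fst (W t))) has_derivative (\<lambda>h. transpose (fst (h *\<^sub>R - G)))) (at t within {0..})"
      using bounded_linear.has_derivative[OF bl_transpose f1] .
    have f2t: "((\<lambda>t. transpose (snd (W t))) has_derivative (\<lambda>h. transpose (snd (h *\<^sub>R - G)))) (at t within {0..})"
      using bounded_linear.has_derivative[OF bl_transpose f2] .
    have D: "((\<lambda>t. balD (W t)) has_derivative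
      (\<lambda>h. (fst (W t) ** transpose (fst (h *\<^sub>R - G)) + fst (h *\<^sub>R - G) ** transpose (fst (W t)))
          - (transpose (snd (W t)) ** snd (h *\<^sub>R - G) + transpose (snd (h *\<^sub>R - G)) ** snd (W t))))
      (at t within {0..})"
      unfolding balD_def
      by (intro has_derivative_diff bounded_bilinear.FDERIV[OF bb_mm] f1 f2 f1t f2t)
    interpret b1: bounded_bilinear "(**) :: real^'d^'m \<Rightarrow> real^'m^'d \<Rightarrow> real^'m^'m"
      by (rule bb_mm)
    interpret b2: bounded_bilinear "(**) :: real^'k^'m \<Rightarrow> real^'m^'k \<Rightarrow> real^'m^'m"
      by (rule bb_mm)
    interpret tl1: bounded_linear "transpose :: real^'d^'m \<Rightarrow> real^'m^'d" by (rule bl_transpose)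
    interpret tl2: bounded_linear "transpose :: real^'m^'k \<Rightarrow> real^'k^'m" by (rule bl_transpose)
    have bal2: "fst (W t) ** transpose (fst G) = transpose (snd G) ** snd (W t)"
      using arg_cong[OF bal, of transpose] by (simp add: matrix_transpose_mul)
    show ?thesis
      using D by (simp add: tl1.scaleR tl2.scaleR tl1.neg tl2.neg b1.scaleR_left b1.scaleR_right
          b2.scaleR_left b2.scaleR_right b1.minus_left b1.minus_right b2.minus_left b2.minus_right bal bal2)
  qed
  have "\<exists>c. \<forall>x\<in>{0..}. balD (W x) = c"
    by (rule has_derivative_zero_constant) (auto intro: der)
  then show ?thesis using t by auto
qed



abbreviation ND :: "real \<Rightarrow> real \<Rightarrow> real measure" where
  "ND m \<sigma> \<equiv> density lborel (normal_density m \<sigma>)"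

lemma nd_int1: "\<sigma> > 0 \<Longrightarrow> integrable (ND m \<sigma>) (\<lambda>x. x)"
  by (subst integrable_density) (auto simp: integrable_normal_moment_nz_1)

lemma nd_integral1: "\<sigma> > 0 \<Longrightarrow> integral\<^sup>L (ND m \<sigma>) (\<lambda>x. x) = m"
  by (subst integral_density) (auto simp: integral_normal_moment_nz_1)

lemma nd_has2: assumes "\<sigma> > 0"
  shows "has_bochner_integral lborel (\<lambda>x. normal_density m \<sigma> x * (x * x)) (m * m + \<sigma>\<^sup>2)"
proof -
  have a: "has_bochner_integral lborel (\<lambda>x. normal_density m \<sigma> x * (x - m)^(2*1)) (\<sigma>\<^sup>2)"
    using normal_moment_even[OF assms, of m 1] by (simp add: power2_eq_square)
  have b: "has_bochner_integral lborel (\<lambda>x. 2 * m * (normal_density m \<sigma> x * x)) (2 * m * m)"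
    by (intro has_bochner_integral_mult_right normal_moment_nz_1 assms)
  have c0: "has_bochner_integral lborel (normal_density m \<sigma>) 1"
    using integrable_normal_density[OF assms] integral_normal_density[OF assms]
    by (metis has_bochner_integral_integrable)
  have c: "has_bochner_integral lborel (\<lambda>x. m * m * normal_density m \<sigma> x) (m * m * 1)"
    by (intro has_bochner_integral_mult_right c0)
  have "has_bochner_integral lborel (\<lambda>x. normal_density m \<sigma> x * (x - m)^(2*1) + 2 * m * (normal_density m \<sigma> x * x) - m * m * normal_density m \<sigma> x) (\<sigma>\<^sup>2 + 2 * m * m - m * m * 1)"
    by (intro has_bochner_integral_diff has_bochner_integral_add a b c)
  also have "(\<lambda>x. normal_density m \<sigma> x * (x - m)^(2*1) + 2 * m * (normal_density m \<sigma> x * x) - m * m * normal_density m \<sigma> x) = (\<lambda>x. normal_density m \<sigma> x * (x * x))"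
    by (auto simp: fun_eq_iff power2_eq_square algebra_simps)
  finally show ?thesis by (simp add: algebra_simps)
qed

lemma nd_int2: "\<sigma> > 0 \<Longrightarrow> integrable (ND m \<sigma>) (\<lambda>x. x * x)"
  apply (subst integrable_density)
  using nd_has2[of \<sigma> m] by (auto simp: has_bochner_integral_iff)

lemma nd_integral2: "\<sigma> > 0 \<Longrightarrow> integral\<^sup>L (ND m \<sigma>) (\<lambda>x. x * x) = m * m + \<sigma>\<^sup>2"
  apply (subst integral_density)
  using nd_has2[of \<sigma> m] by (auto intro: has_bochner_integral_integral_eq)

lemma gauss_prod_space:
  assumes "\<sigma> > 0"
  shows "product_prob_space (\<lambda>i. ND (\<mu> i) \<sigma>)"
proof -
  have "prob_space (ND (\<mu> i) \<sigma>)" for i using prob_space_normal_density[OF assms] .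
  then show ?thesis
    by (intro product_prob_space.intro product_sigma_finite.intro product_prob_space_axioms.intro)
       (auto intro: prob_space_imp_sigma_finite)
qed

lemma nd_one: "\<sigma> > 0 \<Longrightarrow> integral\<^sup>L (ND m \<sigma>) (\<lambda>x. 1) = (1::real)"
  using prob_space.prob_space[OF prob_space_normal_density, of \<sigma> m] by simp

lemma nd_one_int: "\<sigma> > 0 \<Longrightarrow> integrable (ND m \<sigma>) (\<lambda>x. 1::real)"
  using prob_space.finite_measure[OF prob_space_normal_density] by (simp add: finite_measure.integrable_const)

lemma gv_prod:
  fixes f :: "'i::finite \<Rightarrow> real \<Rightarrow> real"
  assumes "\<sigma> > 0" "\<And>j. integrable (ND (\<mu>$j) \<sigma>) (f j)"
  shows "integrable (gauss_vec \<sigma> \<mu>) (\<lambda>\<omega>. \<Prod>j\<in>UNIV. f j (\<omega> j))"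
    "integral\<^sup>L (gauss_vec \<sigma> \<mu>) (\<lambda>\<omega>. \<Prod>j\<in>UNIV. f j (\<omega> j)) = (\<Prod>j\<in>UNIV. integral\<^sup>L (ND (\<mu>$j) \<sigma>) (f j))"
proof -
  interpret P: product_prob_space "\<lambda>i. ND (\<mu> $ i) \<sigma>" I for I
    using gauss_prod_space[OF assms(1), of "\<lambda>i. \<mu> $ i"] .
  show "integrable (gauss_vec \<sigma> \<mu>) (\<lambda>\<omega>. \<Prod>j\<in>UNIV. f j (\<omega> j))"
    unfolding gauss_vec_def by (rule P.product_integrable_prod) (auto intro: assms)
  show "integral\<^sup>L (gauss_vec \<sigma> \<mu>) (\<lambda>\<omega>. \<Prod>j\<in>UNIV. f j (\<omega> j)) = (\<Prod>j\<in>UNIV. integral\<^sup>L (ND (\<mu>$j) \<sigma>) (f j))"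
    unfolding gauss_vec_def by (rule P.product_integral_prod) (auto intro: assms)
qed

lemma gv_mean:
  fixes \<mu> :: "real^'i::finite"
  assumes s: "\<sigma> > 0"
  shows "integrable (gauss_vec \<sigma> \<mu>) (\<lambda>\<omega>. \<omega> i)" "integral\<^sup>L (gauss_vec \<sigma> \<mu>) (\<lambda>\<omega>. \<omega> i) = \<mu> $ i"
proof -
  define f where "f = (\<lambda>j (x::real). if j = i then x else 1)"
  have fi: "integrable (ND (\<mu>$j) \<sigma>) (f j)" for j
    unfolding f_def using nd_int1[OF s] nd_one_int[OF s] by (cases "j = i") auto
  have eq: "(\<lambda>\<omega>. \<Prod>j\<in>UNIV. f j (\<omega> j)) = (\<lambda>\<omega>. \<omega> i)"
    unfolding f_def by (simp add: if_distrib[where f="\<lambda>g. g _"] cong: if_cong)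
  have ieq: "integral\<^sup>L (ND (\<mu>$j) \<sigma>) (f j) = (if j = i then \<mu> $ i else 1)" for j
    unfolding f_def using nd_integral1[OF s] nd_one[OF s] by (cases "j = i") auto
  show "integrable (gauss_vec \<sigma> \<mu>) (\<lambda>\<omega>. \<omega> i)"
    using gv_prod(1)[OF s fi] unfolding eq .
  show "integral\<^sup>L (gauss_vec \<sigma> \<mu>) (\<lambda>\<omega>. \<omega> i) = \<mu> $ i"
    using gv_prod(2)[OF s fi] unfolding eq ieq by simp
qed

lemma gv_second:
  fixes \<mu> :: "real^'i::finite"
  assumes s: "\<sigma> > 0"
  shows "integrable (gauss_vec \<sigma> \<mu>) (\<lambda>\<omega>. \<omega> i * \<omega> k)"
    "integral\<^sup>L (gauss_vec \<sigma> \<mu>) (\<lambda>\<omega>. \<omega> i * \<omega> k) = \<mu> $ i * \<mu> $ k + (if i = k then \<sigma>\<^sup>2 else 0)"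
proof -
  define f where "f = (\<lambda>j (x::real). if i = k then (if j = i then x * x else 1)
     else (if j = i \<or> j = k then x else 1))"
  have fi: "integrable (ND (\<mu>$j) \<sigma>) (f j)" for j
    unfolding f_def using nd_int1[OF s] nd_one_int[OF s] nd_int2[OF s]
    by (cases "i = k"; cases "j = i"; cases "j = k") auto
  have eq: "(\<lambda>\<omega>. \<Prod>j\<in>UNIV. f j (\<omega> j)) = (\<lambda>\<omega>. \<omega> i * \<omega> k)"
  proof
    fix \<omega> :: "'i \<Rightarrow> real"
    show "(\<Prod>j\<in>UNIV. f j (\<omega> j)) = \<omega> i * \<omega> k"
    proof (cases "i = k")
      case True then show ?thesis unfolding f_def by simp
    next
      case False
      have "(\<Prod>j\<in>UNIV. f j (\<omega> j)) = (\<Prod>j\<in>UNIV. if j \<in> {i, k} then \<omega> j else 1)"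
        unfolding f_def using False by (intro prod.cong) auto
      also have "\<dots> = prod \<omega> {i, k}"
        by (subst prod.If_cases) (auto simp: insert_commute Collect_disj_eq)
      finally show ?thesis using False by simp
    qed
  qed
  have ieq: "(\<Prod>j\<in>UNIV. integral\<^sup>L (ND (\<mu>$j) \<sigma>) (f j)) = \<mu> $ i * \<mu> $ k + (if i = k then \<sigma>\<^sup>2 else 0)"
  proof (cases "i = k")
    case True
    have "(\<Prod>j\<in>UNIV. integral\<^sup>L (ND (\<mu>$j) \<sigma>) (f j)) = (\<Prod>j\<in>UNIV. if j = i then \<mu>$i * \<mu>$i + \<sigma>\<^sup>2 else 1)"
      unfolding f_def using True nd_integral2[OF s] nd_one[OF s] by (intro prod.cong) auto
    then show ?thesis using True by simp
  next
    case False
    have "(\<Prod>j\<in>UNIV. integral\<^sup>L (ND (\<mu>$j) \<sigma>) (f j)) = (\<Prod>j\<in>UNIV. if j \<in> {i, k} then \<mu>$j else 1)"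
      unfolding f_def using False nd_integral1[OF s] nd_one[OF s] by (intro prod.cong) auto
    also have "\<dots> = (\<Prod>j\<in>{i,k}. \<mu>$j)"
      by (subst prod.If_cases) (auto simp: insert_commute Collect_disj_eq)
    finally show ?thesis using False by simp
  qed
  show "integrable (gauss_vec \<sigma> \<mu>) (\<lambda>\<omega>. \<omega> i * \<omega> k)"
    using gv_prod(1)[OF s fi] unfolding eq .
  show "integral\<^sup>L (gauss_vec \<sigma> \<mu>) (\<lambda>\<omega>. \<omega> i * \<omega> k) = \<mu> $ i * \<mu> $ k + (if i = k then \<sigma>\<^sup>2 else 0)"
    using gv_prod(2)[OF s fi] unfolding eq ieq .
qed

lemma pair_prod_int:
  fixes g :: "'a \<Rightarrow> real" and h :: "'b \<Rightarrow> real"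
  assumes P1: "prob_space M1" and P2: "prob_space M2" and ig: "integrable M1 g" and ih: "integrable M2 h"
  shows "integrable (M1 \<Otimes>\<^sub>M M2) (\<lambda>z. g (fst z) * h (snd z))"
    "integral\<^sup>L (M1 \<Otimes>\<^sub>M M2) (\<lambda>z. g (fst z) * h (snd z)) = integral\<^sup>L M1 g * integral\<^sup>L M2 h"
proof -
  interpret M1: prob_space M1 by (rule P1)
  interpret M2: prob_space M2 by (rule P2)
  interpret P: pair_prob_space M1 M2 ..
  have [measurable]: "g \<in> borel_measurable M1" "h \<in> borel_measurable M2"
    using ig ih by auto
  have "(\<integral>\<^sup>+ z. ennreal (norm (g (fst z) * h (snd z))) \<partial>(M1 \<Otimes>\<^sub>M M2))
      = (\<integral>\<^sup>+ x. \<integral>\<^sup>+ y. ennreal (norm (g (fst (x,y)) * h (snd (x,y)))) \<partial>M2 \<partial>M1)"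
    by (rule M2.nn_integral_fst[symmetric]) measurable
  also have "\<dots> = (\<integral>\<^sup>+ x. ennreal (norm (g x)) * (\<integral>\<^sup>+ y. ennreal (norm (h y)) \<partial>M2) \<partial>M1)"
    by (simp add: abs_mult ennreal_mult nn_integral_cmult)
  also have "\<dots> = (\<integral>\<^sup>+ x. ennreal (norm (g x)) \<partial>M1) * (\<integral>\<^sup>+ y. ennreal (norm (h y)) \<partial>M2)"
    by (simp add: nn_integral_multc)
  also have "\<dots> < \<infinity>"
    using ig ih by (simp add: integrable_iff_bounded ennreal_mult_less_top)
  finally show int: "integrable (M1 \<Otimes>\<^sub>M M2) (\<lambda>z. g (fst z) * h (snd z))"
    by (simp add: integrable_iff_bounded)
  have "integral\<^sup>L (M1 \<Otimes>\<^sub>M M2) (\<lambda>z. g (fst z) * h (snd z)) = (\<integral>x. (\<integral>y. g (fst (x,y)) * h (snd (x,y)) \<partial>M2) \<partial>M1)"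
    by (rule P.integral_fst'[OF int, symmetric])
  also have "\<dots> = integral\<^sup>L M1 g * integral\<^sup>L M2 h"
    by simp
  finally show "integral\<^sup>L (M1 \<Otimes>\<^sub>M M2) (\<lambda>z. g (fst z) * h (snd z)) = integral\<^sup>L M1 g * integral\<^sup>L M2 h" .
qed

lemma gv_prob: "\<sigma> > 0 \<Longrightarrow> prob_space (gauss_vec \<sigma> \<mu>)"
  unfolding gauss_vec_def by (intro prob_space_PiM prob_space_normal_density)

lemma gv_one_int: assumes "\<sigma> > 0" shows "integrable (gauss_vec \<sigma> \<mu>) (\<lambda>x. 1::real)"
  using prob_space.finite_measure[OF gv_prob[OF assms, of \<mu>]] by (simp add: finite_measure.integrable_const)

lemma gv_meas: assumes "\<sigma> > 0" shows "measure (gauss_vec \<sigma> \<mu>) (space (gauss_vec \<sigma> \<mu>)) = 1"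
  using prob_space.prob_space[OF gv_prob[OF assms, of \<mu>]] by simp

lemma gv_one: assumes "\<sigma> > 0" shows "integral\<^sup>L (gauss_vec \<sigma> \<mu>) (\<lambda>x. 1) = (1::real)"
  using gv_meas[OF assms, of \<mu>] by simp

definition mv :: "real \<Rightarrow> real^'s \<Rightarrow> 's + 'n \<Rightarrow> real" where
  "mv y v j = (case j of Inl i \<Rightarrow> y * v $ i | Inr _ \<Rightarrow> 0)"

lemma cd_prod:
  fixes v :: "real^'s::finite" and g :: "('s \<Rightarrow> real) \<Rightarrow> real" and h :: "('n::finite \<Rightarrow> real) \<Rightarrow> real"
  assumes s: "\<sigma> > 0" and ig: "integrable (gauss_vec \<sigma> (y *\<^sub>R v)) g"
    and ih: "integrable (gauss_vec \<sigma> (0::real^'n)) h"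
  shows "integrable (cond_dist \<sigma> v y :: (('s \<Rightarrow> real) \<times> ('n \<Rightarrow> real)) measure) (\<lambda>z. g (fst z) * h (snd z))"
    "integral\<^sup>L (cond_dist \<sigma> v y :: (('s \<Rightarrow> real) \<times> ('n \<Rightarrow> real)) measure) (\<lambda>z. g (fst z) * h (snd z))
      = integral\<^sup>L (gauss_vec \<sigma> (y *\<^sub>R v)) g * integral\<^sup>L (gauss_vec \<sigma> (0::real^'n)) h"
  unfolding cond_dist_def using pair_prod_int[OF gv_prob[OF s, of "y *\<^sub>R v"] gv_prob[OF s, of "0::real^'n"] ig ih] by auto

lemma cd_moments:
  fixes v :: "real^'s::finite" and y :: real
  assumes s: "\<sigma> > 0"
  defines "M \<equiv> (cond_dist \<sigma> v y :: (('s \<Rightarrow> real) \<times> ('n::finite \<Rightarrow> real)) measure)"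
  shows "integrable M (\<lambda>z. concat_vec (fst z) (snd z) $ j)"
    "integral\<^sup>L M (\<lambda>z. concat_vec (fst z) (snd z) $ j) = mv y v j"
    "integrable M (\<lambda>z. concat_vec (fst z) (snd z) $ j * concat_vec (fst z) (snd z) $ k)"
    "integral\<^sup>L M (\<lambda>z. concat_vec (fst z) (snd z) $ j * concat_vec (fst z) (snd z) $ k)
       = mv y v j * mv y v k + (if j = k then \<sigma>\<^sup>2 else 0)"
proof -
  note m1 = gv_mean[OF s] and m2 = gv_second[OF s] and o1 = gv_one_int[OF s] and o2 = gv_one[OF s] gv_meas[OF s]
  note cp = cd_prod[OF s, where 'n='n and v=v and y=y, folded M_def]
  have "integrable M (\<lambda>z. concat_vec (fst z) (snd z) $ j) \<and>
      integral\<^sup>L M (\<lambda>z. concat_vec (fst z) (snd z) $ j) = mv y v j"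
  proof (cases j)
    case (Inl i)
    have "(\<lambda>z. concat_vec (fst z) (snd z) $ j) = (\<lambda>z. (\<lambda>\<omega>. \<omega> i) (fst z) * (\<lambda>_. 1) (snd z))"
      using Inl by (simp add: concat_vec_def)
    then show ?thesis using cp[OF m1(1) o1] Inl by (simp add: m1 o2 mv_def)
  next
    case (Inr i)
    have "(\<lambda>z. concat_vec (fst z) (snd z) $ j) = (\<lambda>z. (\<lambda>_. 1) (fst z) * (\<lambda>\<omega>. \<omega> i) (snd z))"
      using Inr by (simp add: concat_vec_def)
    then show ?thesis using cp[OF o1 m1(1)] Inr by (simp add: m1 o2 mv_def)
  qed
  then show "integrable M (\<lambda>z. concat_vec (fst z) (snd z) $ j)"
    "integral\<^sup>L M (\<lambda>z. concat_vec (fst z) (snd z) $ j) = mv y v j" by auto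
  have "integrable M (\<lambda>z. concat_vec (fst z) (snd z) $ j * concat_vec (fst z) (snd z) $ k) \<and>
    integral\<^sup>L M (\<lambda>z. concat_vec (fst z) (snd z) $ j * concat_vec (fst z) (snd z) $ k)
       = mv y v j * mv y v k + (if j = k then \<sigma>\<^sup>2 else 0)"
  proof (cases j; cases k)
    fix i i' assume j: "j = Inl i" and k: "k = Inl i'"
    have "(\<lambda>z. concat_vec (fst z) (snd z) $ j * concat_vec (fst z) (snd z) $ k) = (\<lambda>z. (\<lambda>\<omega>. \<omega> i * \<omega> i') (fst z) * (\<lambda>_. 1) (snd z))"
      using j k by (simp add: concat_vec_def)
    then show ?thesis using cp[OF m2(1) o1] j k by (simp add: m2 o2 mv_def)
  next
    fix i i' assume j: "j = Inl i" and k: "k = Inr i'"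
    have "(\<lambda>z. concat_vec (fst z) (snd z) $ j * concat_vec (fst z) (snd z) $ k) = (\<lambda>z. (\<lambda>\<omega>. \<omega> i) (fst z) * (\<lambda>\<omega>. \<omega> i') (snd z))"
      using j k by (simp add: concat_vec_def)
    then show ?thesis using cp[OF m1(1) m1(1)] j k by (simp add: m1 mv_def)
  next
    fix i i' assume j: "j = Inr i" and k: "k = Inl i'"
    have "(\<lambda>z. concat_vec (fst z) (snd z) $ j * concat_vec (fst z) (snd z) $ k) = (\<lambda>z. (\<lambda>\<omega>. \<omega> i') (fst z) * (\<lambda>\<omega>. \<omega> i) (snd z))"
      using j k by (simp add: concat_vec_def mult.commute)
    then show ?thesis using cp[OF m1(1) m1(1)] j k by (simp add: m1 mv_def)
  next
    fix i i' assume j: "j = Inr i" and k: "k = Inr i'"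
    have "(\<lambda>z. concat_vec (fst z) (snd z) $ j * concat_vec (fst z) (snd z) $ k) = (\<lambda>z. (\<lambda>_. 1) (fst z) * (\<lambda>\<omega>. \<omega> i * \<omega> i') (snd z))"
      using j k by (simp add: concat_vec_def)
    then show ?thesis using cp[OF o1 m2(1)] j k by (simp add: m2 o2 mv_def)
  qed
  then show "integrable M (\<lambda>z. concat_vec (fst z) (snd z) $ j * concat_vec (fst z) (snd z) $ k)"
    "integral\<^sup>L M (\<lambda>z. concat_vec (fst z) (snd z) $ j * concat_vec (fst z) (snd z) $ k)
       = mv y v j * mv y v k + (if j = k then \<sigma>\<^sup>2 else 0)" by auto
qed



lemma quad_exp:
  fixes X :: "'j::finite \<Rightarrow> 'a \<Rightarrow> real"
  assumes P: "prob_space M"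
    and i1: "\<And>j. integrable M (X j)" and i2: "\<And>j k. integrable M (\<lambda>z. X j z * X k z)"
    and e1: "\<And>j. integral\<^sup>L M (X j) = m j"
    and e2: "\<And>j k. integral\<^sup>L M (\<lambda>z. X j z * X k z) = m j * m k + (if j = k then s2 else 0)"
  shows "integral\<^sup>L M (\<lambda>z. ((\<Sum>j\<in>UNIV. w j * X j z) - c)\<^sup>2)
      = ((\<Sum>j\<in>UNIV. w j * m j) - c)\<^sup>2 + s2 * (\<Sum>j\<in>UNIV. (w j)\<^sup>2)"
proof -
  interpret prob_space M by (rule P)
  have expand: "(\<lambda>z. ((\<Sum>j\<in>UNIV. w j * X j z) - c)\<^sup>2) =
     (\<lambda>z. (\<Sum>j\<in>UNIV. \<Sum>k\<in>UNIV. (w j * w k) * (X j z * X k z)) - (\<Sum>j\<in>UNIV. (2 * c * w j) * X j z) + c * c)"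
    by (auto simp: fun_eq_iff power2_eq_square sum_product sum_distrib_left algebra_simps)
  have ia: "integrable M (\<lambda>z. \<Sum>j\<in>UNIV. \<Sum>k\<in>UNIV. (w j * w k) * (X j z * X k z))"
    by (auto intro!: integrable_sum integrable_mult_right i2)
  have ib: "integrable M (\<lambda>z. \<Sum>j\<in>UNIV. (2 * c * w j) * X j z)"
    by (auto intro!: integrable_sum integrable_mult_right i1)
  have "integral\<^sup>L M (\<lambda>z. ((\<Sum>j\<in>UNIV. w j * X j z) - c)\<^sup>2) =
     (\<Sum>j\<in>UNIV. \<Sum>k\<in>UNIV. (w j * w k) * (m j * m k + (if j = k then s2 else 0))) - (\<Sum>j\<in>UNIV. (2 * c * w j) * m j) + c * c"
  proof -
    have I1: "integral\<^sup>L M (\<lambda>z. \<Sum>j\<in>UNIV. \<Sum>k\<in>UNIV. (w j * w k) * (X j z * X k z))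
       = (\<Sum>j\<in>UNIV. \<Sum>k\<in>UNIV. (w j * w k) * (m j * m k + (if j = k then s2 else 0)))"
      apply (subst Bochner_Integration.integral_sum[where f="\<lambda>j z. \<Sum>k\<in>UNIV. (w j * w k) * (X j z * X k z)"])
       apply (auto intro!: integrable_sum integrable_mult_right i2)[1]
      apply (rule sum.cong[OF refl])
      apply (subst Bochner_Integration.integral_sum[where f="\<lambda>k z. (w _ * w k) * (X _ z * X k z)"])
       apply (auto intro!: integrable_sum integrable_mult_right i2)[1]
      apply (simp add: e2)
      done
    have I2: "integral\<^sup>L M (\<lambda>z. \<Sum>j\<in>UNIV. (2 * c * w j) * X j z) = (\<Sum>j\<in>UNIV. (2 * c * w j) * m j)"
      apply (subst Bochner_Integration.integral_sum[where f="\<lambda>j z. (2 * c * w j) * X j z"])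
       apply (auto intro!: integrable_mult_right i1)[1]
      apply (simp add: e1)
      done
    have I3: "integral\<^sup>L M (\<lambda>z. (\<Sum>j\<in>UNIV. \<Sum>k\<in>UNIV. (w j * w k) * (X j z * X k z)) - (\<Sum>j\<in>UNIV. (2 * c * w j) * X j z) + c * c)
       = integral\<^sup>L M (\<lambda>z. \<Sum>j\<in>UNIV. \<Sum>k\<in>UNIV. (w j * w k) * (X j z * X k z)) - integral\<^sup>L M (\<lambda>z. \<Sum>j\<in>UNIV. (2 * c * w j) * X j z) + c * c"
      using ia ib by (simp add: prob_space)
    show ?thesis unfolding expand I3 I1 I2 ..
  qed
  also have "\<dots> = ((\<Sum>j\<in>UNIV. w j * m j) - c)\<^sup>2 + s2 * (\<Sum>j\<in>UNIV. (w j)\<^sup>2)"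
    by (simp add: distrib_left sum.distrib if_distrib[where f="\<lambda>x. _ * x"] power2_eq_square
          sum_product sum_distrib_left algebra_simps cong: if_cong)
  finally show ?thesis .
qed

lemma cd_loss:
  fixes v :: "real^'s::finite" and y :: real
    and W :: "(real^('s + 'n::finite)^('m::finite)) \<times> (real^'m^1)"
  assumes s: "\<sigma> > 0"
  shows "(\<integral>z. 1/2 * (norm (model W (concat_vec (fst z) (snd z)) - vec y))\<^sup>2
            \<partial>(cond_dist \<sigma> v y :: (('s \<Rightarrow> real) \<times> ('n \<Rightarrow> real)) measure))
    = 1/2 * (((\<Sum>j\<in>UNIV. (snd W ** fst W) $ 1 $ j * mv y v j) - y)\<^sup>2
             + \<sigma>\<^sup>2 * (\<Sum>j\<in>UNIV. ((snd W ** fst W) $ 1 $ j)\<^sup>2))"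
proof -
  let ?M = "cond_dist \<sigma> v y :: (('s \<Rightarrow> real) \<times> ('n \<Rightarrow> real)) measure"
  have P: "prob_space ?M"
    unfolding cond_dist_def
    by (intro prob_space_pair gv_prob[OF s])
  have eq: "(norm (model W (concat_vec (fst z) (snd z)) - vec y))\<^sup>2
     = ((\<Sum>j\<in>UNIV. (snd W ** fst W) $ 1 $ j * concat_vec (fst z) (snd z) $ j) - y)\<^sup>2" for z
    by (simp add: norm_vector_1 model_def matrix_vector_mult_def)
  have q: "integral\<^sup>L ?M (\<lambda>z. ((\<Sum>j\<in>UNIV. (snd W ** fst W) $ 1 $ j * concat_vec (fst z) (snd z) $ j) - y)\<^sup>2)
     = ((\<Sum>j\<in>UNIV. (snd W ** fst W) $ 1 $ j * mv y v j) - y)\<^sup>2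
             + \<sigma>\<^sup>2 * (\<Sum>j\<in>UNIV. ((snd W ** fst W) $ 1 $ j)\<^sup>2)"
    by (rule quad_exp[OF P, where X="\<lambda>j z. concat_vec (fst z) (snd z) $ j"])
       (use cd_moments[OF s, where 'n='n and v=v and y=y] in auto)
  show ?thesis unfolding eq using q by simp
qed

lemma pop_loss_formula:
  fixes v :: "real^'s::finite"
    and W :: "(real^('s + 'n::finite)^('m::finite)) \<times> (real^'m^1)"
  assumes s: "\<sigma> > 0"
  shows "pop_loss p \<sigma> v W = 1/2 * (((\<Sum>i\<in>UNIV. (snd W ** fst W) $ 1 $ Inl i * v $ i) - 1)\<^sup>2
             + \<sigma>\<^sup>2 * (\<Sum>j\<in>UNIV. ((snd W ** fst W) $ 1 $ j)\<^sup>2))"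
proof -
  have sp: "(\<Sum>j\<in>UNIV. f j) = (\<Sum>i\<in>UNIV. f (Inl i)) + (\<Sum>i\<in>UNIV. f (Inr i))" for f :: "'s + 'n \<Rightarrow> real"
    using sum.Plus[of "UNIV::'s set" "UNIV::'n set" f] by (simp add: comp_def)
  have a: "(\<Sum>j\<in>UNIV. (snd W ** fst W) $ 1 $ j * mv y v j) = y * (\<Sum>i\<in>UNIV. (snd W ** fst W) $ 1 $ Inl i * v $ i)" for y
    by (subst sp) (simp add: mv_def sum_distrib_left algebra_simps)
  have e: "((-1) * S - (-1))\<^sup>2 = (1 * S - 1)\<^sup>2" for S :: real
    by (simp add: power2_eq_square algebra_simps)
  have pE: "p * E + (1 - p) * E = E" for E :: real
    by (simp add: algebra_simps)
  show ?thesis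
    unfolding pop_loss_def cd_loss[OF s] a e pE by simp
qed



lemma final_alg:
  fixes W1 :: "real^'d^'m::finite" and W2 :: "real^'m^1"
  assumes bal: "W1 ** transpose W1 = transpose W2 ** W2" and z: "(W2 ** W1) $ 1 $ d = 0"
  shows "W1 $ k $ d = 0"
proof -
  define c where "c k = W1 $ k $ d" for k
  have h1: "(\<Sum>l\<in>UNIV. W1 $ k $ l * W1 $ k' $ l) = W2 $ 1 $ k * W2 $ 1 $ k'" for k k'
  proof -
    have "(W1 ** transpose W1) $ k $ k' = (transpose W2 ** W2) $ k $ k'" using bal by simp
    then show ?thesis by (simp add: matrix_matrix_mult_def transpose_def sum_1)
  qed
  have h2: "(\<Sum>k\<in>UNIV. c k * W2 $ 1 $ k) = 0"
    using z by (simp add: matrix_matrix_mult_def c_def mult.commute)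
  have "(\<Sum>l\<in>UNIV. (\<Sum>k\<in>UNIV. c k * W1 $ k $ l)\<^sup>2)
      = (\<Sum>l\<in>UNIV. \<Sum>k\<in>UNIV. \<Sum>k'\<in>UNIV. c k * c k' * (W1 $ k $ l * W1 $ k' $ l))"
    by (simp add: power2_eq_square sum_product algebra_simps)
  also have "\<dots> = (\<Sum>k\<in>UNIV. \<Sum>l\<in>UNIV. \<Sum>k'\<in>UNIV. c k * c k' * (W1 $ k $ l * W1 $ k' $ l))"
    by (rule sum.swap)
  also have "\<dots> = (\<Sum>k\<in>UNIV. \<Sum>k'\<in>UNIV. \<Sum>l\<in>UNIV. c k * c k' * (W1 $ k $ l * W1 $ k' $ l))"
    by (rule sum.cong[OF refl], rule sum.swap)
  also have "\<dots> = (\<Sum>k\<in>UNIV. \<Sum>k'\<in>UNIV. c k * c k' * (\<Sum>l\<in>UNIV. W1 $ k $ l * W1 $ k' $ l))"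
    by (simp add: sum_distrib_left)
  also have "\<dots> = (\<Sum>k\<in>UNIV. c k * W2 $ 1 $ k)\<^sup>2"
    by (simp add: h1 power2_eq_square sum_product algebra_simps)
  also have "\<dots> = 0" using h2 by simp
  finally have s0: "(\<Sum>l\<in>UNIV. (\<Sum>k\<in>UNIV. c k * W1 $ k $ l)\<^sup>2) = 0" .
  then have "(\<Sum>k\<in>UNIV. c k * W1 $ k $ d)\<^sup>2 = 0"
    by (subst (asm) sum_nonneg_eq_0_iff) auto
  then have "(\<Sum>k\<in>UNIV. (c k)\<^sup>2) = 0"
    by (simp add: c_def power2_eq_square)
  then have "(c k)\<^sup>2 = 0"
    by (subst (asm) sum_nonneg_eq_0_iff) auto
  then show ?thesis by (simp add: c_def)
qed



theorem theorem2:
  fixes v :: "real^'s::finite" and \<sigma> p :: real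
    and W :: "real \<Rightarrow> (real^('s + 'n::finite)^('m::finite)) \<times> (real^'m^1)"
    and Winf :: "(real^('s + 'n)^'m) \<times> (real^'m^1)"
  assumes "\<sigma> > 0" and "0 \<le> p" and "p \<le> 1"
    and "gradient_flow (pop_loss p \<sigma> v) W"
    and "transpose (snd (W 0)) ** snd (W 0) = fst (W 0) ** transpose (fst (W 0))"
    and "(W \<longlongrightarrow> Winf) at_top"
    and "\<forall>W' :: (real^('s + 'n)^'m) \<times> (real^'m^1). pop_loss p \<sigma> v Winf \<le> pop_loss p \<sigma> v W'"
  shows "\<forall>i j. fst Winf $ i $ Inr j = 0"
proof -
  note s = assms(1)
  have dep: "pop_loss p \<sigma> v X = pop_loss p \<sigma> v Y" if "snd X ** fst X = snd Y ** fst Y" for X Y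
    :: "(real^('s + 'n)^'m) \<times> (real^'m^1)"
    unfolding pop_loss_def model_def using that by simp
  have b0: "balD (W t) = 0" if "t \<ge> 0" for t
    using conserve[OF dep assms(4) that] assms(5) by (simp add: balD_def)
  have lim1: "((\<lambda>t. balD (W t)) \<longlongrightarrow> balD Winf) at_top"
    unfolding balD_def
    by (intro tendsto_diff bounded_bilinear.tendsto[OF bb_mm] bounded_linear.tendsto[OF bl_transpose]
          tendsto_fst tendsto_snd assms(6))
  have lim2: "((\<lambda>t. balD (W t)) \<longlongrightarrow> 0) at_top"
    by (rule tendsto_eventually) (auto intro: eventually_at_top_linorderI[of 0] b0)
  have bal: "balD Winf = 0"
    using tendsto_unique[OF trivial_limit_at_top_linorder lim1 lim2] .
  define W' :: "(real^('s + 'n)^'m) \<times> (real^'m^1)" where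
    "W' = ((\<chi> k j. case j of Inl _ \<Rightarrow> fst Winf $ k $ j | Inr _ \<Rightarrow> 0), snd Winf)"
  define w where "w j = (snd Winf ** fst Winf) $ 1 $ j" for j
  have w': "(snd W' ** fst W') $ 1 $ j = (case j of Inl _ \<Rightarrow> w j | Inr _ \<Rightarrow> 0)" for j
    unfolding W'_def w_def by (cases j) (simp_all add: matrix_matrix_mult_def)
  have sp: "(\<Sum>j\<in>UNIV. f j) = (\<Sum>i\<in>UNIV. f (Inl i)) + (\<Sum>i\<in>UNIV. f (Inr i))" for f :: "'s + 'n \<Rightarrow> real"
    using sum.Plus[of "UNIV::'s set" "UNIV::'n set" f] by (simp add: comp_def)
  have "pop_loss p \<sigma> v Winf \<le> pop_loss p \<sigma> v W'" using assms(7) by blast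
  then have "\<sigma>\<^sup>2 * (\<Sum>j\<in>UNIV. (w j)\<^sup>2) \<le> \<sigma>\<^sup>2 * (\<Sum>i\<in>UNIV. (w (Inl i))\<^sup>2)"
  proof -
    have eqs: "(\<Sum>j\<in>UNIV. (case j of Inl x \<Rightarrow> w j | Inr x \<Rightarrow> 0)\<^sup>2) = (\<Sum>i\<in>UNIV. (w (Inl i))\<^sup>2)"
      by (subst sp) simp
    assume "pop_loss p \<sigma> v Winf \<le> pop_loss p \<sigma> v W'"
    then show ?thesis
      unfolding pop_loss_formula[OF s] w' unfolding w_def[symmetric] eqs by simp
  qed
  then have "\<sigma>\<^sup>2 * (\<Sum>i\<in>UNIV. (w (Inr i))\<^sup>2) \<le> 0"
    by (subst (asm) sp) (simp add: distrib_left)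
  then have "(\<Sum>i\<in>UNIV. (w (Inr i))\<^sup>2) \<le> 0"
    using s by (simp add: mult_le_0_iff)
  then have "(\<Sum>i\<in>UNIV. (w (Inr i))\<^sup>2) = 0"
    by (simp add: antisym sum_nonneg)
  then have wz: "w (Inr i) = 0" for i
    by (subst (asm) sum_nonneg_eq_0_iff) auto
  show ?thesis
  proof (intro allI)
    fix i j
    show "fst Winf $ i $ Inr j = 0"
      by (rule final_alg) (use bal wz[of j] in \<open>simp_all add: balD_def w_def\<close>)
  qed
qed


end
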